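(* Let $(G,* )$ be a group and let $\mathcal{L}$ be a $T_0$-separating nest on $G$. If for every $g\in G$ and every $L\in\mathcal{L}$ we have $g*L\in\mathcal{L}$ and $L*g\in\mathcal{L}$, then $\triangleleft_{\mathcal{L}}$ is compatible with $*$.
   Context: A nest on $G$ is a family of subsets totally ordered by inclusion; it is $T_0$-separating if for all distinct $x,y$ some member contains exactly one of them. $x\triangleleft_{\mathcal{L}} y$ iff there exists $L\in\mathcal{L}$ with $x\in L$ and $y\notin L$. $g*L=\{g*l : l\in L\}$, $L*g=\{l*g : l\in L\}$. The order $\triangleleft_{\mathcal{L}}$ is compatible with $*$ if for all $a,b,g\in G$: $a\triangleleft_{\mathcal{L}} b$ if and only if ($a*g\triangleleft_{\mathcal{L}} b*g$ and $g*a\triangleleft_{\mathcal{L}} g*b$). *)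

theory Defs
  imports "HOL-Algebra.Coset"
begin

definition nest :: "'a set \<Rightarrow> 'a set set \<Rightarrow> bool" where
  "nest X \<L> \<longleftrightarrow> (\<forall>L\<in>\<L>. L \<subseteq> X) \<and> (\<forall>L\<in>\<L>. \<forall>M\<in>\<L>. L \<subseteq> M \<or> M \<subseteq> L)"

definition T0_separating :: "'a set \<Rightarrow> 'a set set \<Rightarrow> bool" where
  "T0_separating X \<L> \<longleftrightarrow>
     (\<forall>x\<in>X. \<forall>y\<in>X. x \<noteq> y \<longrightarrow> (\<exists>L\<in>\<L>. (x \<in> L \<and> y \<notin> L) \<or> (y \<in> L \<and> x \<notin> L)))"

definition nest_less :: "'a set set \<Rightarrow> 'a \<Rightarrow> 'a \<Rightarrow> bool" where
  "nest_less \<L> x y \<longleftrightarrow> (\<exists>L\<in>\<L>. x \<in> L \<and> y \<notin> L)"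

definition compatible :: "('a, 'b) monoid_scheme \<Rightarrow> ('a \<Rightarrow> 'a \<Rightarrow> bool) \<Rightarrow> bool" where
  "compatible G R \<longleftrightarrow>
     (\<forall>a\<in>carrier G. \<forall>b\<in>carrier G. \<forall>g\<in>carrier G.
        R a b \<longleftrightarrow> (R (a \<otimes>\<^bsub>G\<^esub> g) (b \<otimes>\<^bsub>G\<^esub> g) \<and> R (g \<otimes>\<^bsub>G\<^esub> a) (g \<otimes>\<^bsub>G\<^esub> b)))"

end

theory Submission
  imports Defs
begin

lemma r_sep:
  fixes G (structure)
  assumes G: "group G" and h: "h \<in> carrier G" and x: "x \<in> carrier G" and y: "y \<in> carrier G"
    and LS: "L \<subseteq> carrier G" and xL: "x \<in> L" and yL: "y \<notin> L"
  shows "x \<otimes>\<^bsub>G\<^esub> h \<in> L #>\<^bsub>G\<^esub> h \<and> y \<otimes>\<^bsub>G\<^esub> h \<notin> L #>\<^bsub>G\<^esub> h"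
proof -
  interpret group G by fact
  have "x \<otimes> h \<in> L #> h" using xL unfolding r_coset_def by blast
  moreover have "y \<otimes> h \<notin> L #> h"
  proof
    assume "y \<otimes> h \<in> L #> h"
    then obtain l where l: "l \<in> L" "y \<otimes> h = l \<otimes> h" unfolding r_coset_def by blast
    then have "y = l" using LS h y by (meson right_cancel subsetD)
    with l yL show False by simp
  qed
  ultimately show ?thesis by blast
qed

lemma l_sep:
  fixes G (structure)
  assumes G: "group G" and h: "h \<in> carrier G" and x: "x \<in> carrier G" and y: "y \<in> carrier G"
    and LS: "L \<subseteq> carrier G" and xL: "x \<in> L" and yL: "y \<notin> L"
  shows "h \<otimes>\<^bsub>G\<^esub> x \<in> h <#\<^bsub>G\<^esub> L \<and> h \<otimes>\<^bsub>G\<^esub> y \<notin> h <#\<^bsub>G\<^esub> L"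
proof -
  interpret group G by fact
  have "h \<otimes> x \<in> h <# L" using xL unfolding l_coset_def by blast
  moreover have "h \<otimes> y \<notin> h <# L"
  proof
    assume "h \<otimes> y \<in> h <# L"
    then obtain l where l: "l \<in> L" "h \<otimes> y = h \<otimes> l" unfolding l_coset_def by blast
    then have "y = l" using LS h y by (metis Units_l_cancel Units_eq subsetD)
    with l yL show False by simp
  qed
  ultimately show ?thesis by blast
qed

theorem proposition5p1:
  fixes G (structure) and \<L> :: "'a set set"
  assumes "group G"
    and "nest (carrier G) \<L>"
    and "T0_separating (carrier G) \<L>"
    and "\<And>g L. g \<in> carrier G \<Longrightarrow> L \<in> \<L> \<Longrightarrow> g <# L \<in> \<L>"
    and "\<And>g L. g \<in> carrier G \<Longrightarrow> L \<in> \<L> \<Longrightarrow> L #> g \<in> \<L>"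
  shows "compatible G (nest_less \<L>)"
  unfolding compatible_def
proof (intro ballI iffI conjI)
  interpret group G by fact
  have LS: "\<And>L. L \<in> \<L> \<Longrightarrow> L \<subseteq> carrier G" using assms(2) unfolding nest_def by blast
  fix a b g assume a: "a \<in> carrier G" and b: "b \<in> carrier G" and g: "g \<in> carrier G"
  {
    assume "nest_less \<L> a b"
    then obtain L where L: "L \<in> \<L>" "a \<in> L" "b \<notin> L" unfolding nest_less_def by blast
    show "nest_less \<L> (a \<otimes> g) (b \<otimes> g)"
      using r_sep[OF assms(1) g a b LS[OF L(1)] L(2,3)] assms(5)[OF g L(1)]
      unfolding nest_less_def by blast
    show "nest_less \<L> (g \<otimes> a) (g \<otimes> b)"
      using l_sep[OF assms(1) g a b LS[OF L(1)] L(2,3)] assms(4)[OF g L(1)]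
      unfolding nest_less_def by blast
  }
  assume "nest_less \<L> (a \<otimes> g) (b \<otimes> g) \<and> nest_less \<L> (g \<otimes> a) (g \<otimes> b)"
  then obtain L where L: "L \<in> \<L>" "a \<otimes> g \<in> L" "b \<otimes> g \<notin> L" unfolding nest_less_def by blast
  have ig: "inv g \<in> carrier G" using g by simp
  have "(a \<otimes> g) \<otimes> inv g = a" "(b \<otimes> g) \<otimes> inv g = b" using a b g by (simp_all add: m_assoc)
  then show "nest_less \<L> a b"
    using r_sep[OF assms(1) ig _ _ LS[OF L(1)] L(2,3)] assms(5)[OF ig L(1)] a b g
    unfolding nest_less_def by (metis m_closed)
qed

end
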